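(* Let $n\in\mathbb{N}\cup\{0\}$, $A_1,\dots,A_n\in\mathscr{Q}$ and $\mathcal{A}=\{A_1,\dots,A_n\}$. An option set $S\in\mathscr{Q}$ belongs to $\mathrm{Ex}(\mathcal{A})$ if and only if either $S\cap\mathscr{V}_{>0}\neq\emptyset$, or $n\neq0$ and there exists $T\in\mathrm{Posi}'(A_1,\dots,A_n)$ such that for every $t\in T$ there is some $s\in S\cup\{0\}$ with $t\le s$.
   Context: Let $\mathcal{X}$ be a nonempty set and let $\mathscr{V}$ be the real vector space of all functions $u:\mathcal{X}\to\mathbb{R}$ (options), with pointwise operations. For $u,v\in\mathscr{V}$, $u\le v$ iff $u(x)\le v(x)$ for all $x\in\mathcal{X}$, and $u<v$ iff $u\le v$ and $u\neq v$. Let $\mathscr{V}_{>0}=\{u\in\mathscr{V}:0<u\}$ and $\mathscr{V}^s_{>0}=\{\{u\}:u\in\mathscr{V}_{>0}\}$. Let $\mathscr{Q}$ be the set of all finite subsets of $\mathscr{V}$ (including $\emptyset$). For a positive integer $n$, $\mathbb{R}^{n,+}=\{\boldsymbol\lambda\in\mathbb{R}^n:\lambda_j\ge0\ \forall j,\ \sum_j\lambda_j>0\}$, and for $\boldsymbol\lambda\in\mathbb{R}^n$, $\mathbf u=(u_1,\dots,u_n)\in\mathscr{V}^n$, $\boldsymbol\lambda\mathbf u=\sum_{j=1}^n\lambda_ju_j$. A set of desirable option sets is any $K\subseteq\mathscr{Q}$. It is coherent if for all $A,B\in K$: (K0) $A\setminus\{0\}\in K$; (K1) $\{0\}\notin K$;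 (K2) $\mathscr{V}^s_{>0}\subseteq K$; (K3) $\{\boldsymbol\lambda(\mathbf u)\mathbf u:\mathbf u\in A\times B\}\in K$ for every map $\boldsymbol\lambda:A\times B\to\mathbb{R}^{2,+}$; (K4) $A\cup Q\in K$ for all $Q\in\mathscr{Q}$. $\bar{\mathbf K}$ denotes the set of coherent sets of desirable option sets. An assessment is any subset $\mathcal{A}\subseteq\mathscr{Q}$. Let $\bar{\mathbf K}(\mathcal A)=\{K\in\bar{\mathbf K}:\mathcal A\subseteq K\}$ and $\mathrm{Ex}(\mathcal A)=\bigcap\bar{\mathbf K}(\mathcal A)$, with the convention $\bigcap\emptyset=\mathscr{Q}$. For a positive integer $n$ and $A_1,\dots,A_n\in\mathscr{Q}$: $\mathrm{Posi}'(A_1,\dots,A_n)=\{\{\boldsymbol\lambda(\mathbf u)\mathbf u:\mathbf u\in\times_{j=1}^nA_j\}:\ \boldsymbol\lambda:\times_{j=1}^nA_j\to\mathbb{R}^{n,+}\}$. *)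

theory Defs
  imports Complex_Main "HOL-Library.Function_Algebras" "HOL-Library.FuncSet"
begin

type_synonym 'x opt = "'x \<Rightarrow> real"

definition optsets :: "'x opt set set" where
  "optsets = {A. finite A}"

definition Vpos :: "'x opt set" where
  "Vpos = {u. (0::'x opt) < u}"

definition coherent :: "'x opt set set \<Rightarrow> bool" where
  "coherent K \<longleftrightarrow> K \<subseteq> optsets \<and>
     (\<forall>A\<in>K. A - {0} \<in> K) \<and>
     {0} \<notin> K \<and>
     (\<forall>u\<in>Vpos. {u} \<in> K) \<and>
     (\<forall>A\<in>K. \<forall>B\<in>K. \<forall>lam :: 'x opt \<times> 'x opt \<Rightarrow> real \<times> real.
        (\<forall>a\<in>A. \<forall>b\<in>B. fst (lam (a,b)) \<ge> 0 \<and> snd (lam (a,b)) \<ge> 0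
                      \<and> fst (lam (a,b)) + snd (lam (a,b)) > 0) \<longrightarrow>
        {(\<lambda>x. fst (lam (a,b)) * a x + snd (lam (a,b)) * b x) | a b. a \<in> A \<and> b \<in> B} \<in> K) \<and>
     (\<forall>A\<in>K. \<forall>Q\<in>optsets. A \<union> Q \<in> K)"

definition Ex :: "'x opt set set \<Rightarrow> 'x opt set set" where
  "Ex \<A> = {S \<in> optsets. \<forall>K. coherent K \<and> \<A> \<subseteq> K \<longrightarrow> S \<in> K}"

text \<open>Posi' for A_0,...,A_(n-1); tuples are extensional functions in PiE {..<n} A.\<close>
definition Posi' :: "nat \<Rightarrow> (nat \<Rightarrow> 'x opt set) \<Rightarrow> 'x opt set set" where
  "Posi' n A = {T. \<exists>lam :: (nat \<Rightarrow> 'x opt) \<Rightarrow> nat \<Rightarrow> real.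
      (\<forall>u\<in>PiE {..<n} A. (\<forall>j<n. lam u j \<ge> 0) \<and> (\<Sum>j<n. lam u j) > 0) \<and>
      T = {(\<lambda>x. \<Sum>j<n. lam u j * u j x) | u. u \<in> PiE {..<n} A}}"

end

theory Submission
  imports Defs
begin

definition comb :: "nat \<Rightarrow> ((nat \<Rightarrow> 'x opt) \<Rightarrow> nat \<Rightarrow> real) \<Rightarrow> (nat \<Rightarrow> 'x opt) \<Rightarrow> 'x opt" where
  "comb n lam u = (\<lambda>x. \<Sum>j<n. lam u j * u j x)"

definition validlam :: "nat \<Rightarrow> (nat \<Rightarrow> 'x opt set) \<Rightarrow> ((nat \<Rightarrow> 'x opt) \<Rightarrow> nat \<Rightarrow> real) \<Rightarrow> bool" where
  "validlam n A lam \<longleftrightarrow> (\<forall>u\<in>PiE {..<n} A. (\<forall>j<n. lam u j \<ge> 0) \<and> (\<Sum>j<n. lam u j) > 0)"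

lemma posi'_iff: "T \<in> Posi' n A \<longleftrightarrow> (\<exists>lam. validlam n A lam \<and> T = comb n lam ` PiE {..<n} A)"
  unfolding Posi'_def validlam_def comb_def by (auto simp: Setcompr_eq_image)

lemma validlamD:
  assumes "validlam n A lam" "u \<in> PiE {..<n} A"
  shows "\<forall>j<n. lam u j \<ge> 0" "(\<Sum>j<n. lam u j) > 0"
  using assms unfolding validlam_def by blast+

lemma coh_fin: "coherent K \<Longrightarrow> A \<in> K \<Longrightarrow> finite A"
  unfolding coherent_def optsets_def by auto

lemma coh_union: "coherent K \<Longrightarrow> A \<in> K \<Longrightarrow> finite Q \<Longrightarrow> A \<union> Q \<in> K"
  unfolding coherent_def optsets_def by auto

lemma coh_sup: "coherent K \<Longrightarrow> A \<in> K \<Longrightarrow> A \<subseteq> B \<Longrightarrow> finite B \<Longrightarrow> B \<in> K"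
  using coh_union[of K A B] by (simp add: sup_absorb2)

lemma coh_ne: "coherent K \<Longrightarrow> A \<in> K \<Longrightarrow> A \<noteq> {}"
  using coh_union[of K A "{0}"] unfolding coherent_def by auto

lemma coh_pos: "coherent K \<Longrightarrow> u \<in> Vpos \<Longrightarrow> {u} \<in> K"
  unfolding coherent_def by auto

lemma coh_minus0: "coherent K \<Longrightarrow> A \<in> K \<Longrightarrow> A - {0} \<in> K"
  unfolding coherent_def by auto

lemma coh_K3: "coherent K \<Longrightarrow> A \<in> K \<Longrightarrow> B \<in> K \<Longrightarrow>
   (\<forall>a\<in>A. \<forall>b\<in>B. fst (lam (a,b)) \<ge> 0 \<and> snd (lam (a,b)) \<ge> 0 \<and> fst (lam (a,b)) + snd (lam (a,b)) > 0) \<Longrightarrow>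
   {(\<lambda>x. fst (lam (a,b)) * a x + snd (lam (a,b)) * b x) | a b. a \<in> A \<and> b \<in> B} \<in> K"
  unfolding coherent_def by blast

lemma coh_subst:
  assumes K: "coherent K" and P: "P \<in> K" and Q: "Q \<in> K" and a: "a \<in> P"
    and fg: "\<forall>q\<in>Q. f q \<ge> 0 \<and> g q \<ge> 0 \<and> f q + g q > 0"
  shows "(P - {a}) \<union> (\<lambda>q. (\<lambda>x. f q * a x + g q * q x)) ` Q \<in> K"
proof -
  define lam where "lam = (\<lambda>(p::'a opt, q::'a opt). if p = a then (f q, g q) else (1::real, 0::real))"
  have "{(\<lambda>x. fst (lam (p,q)) * p x + snd (lam (p,q)) * q x) | p q. p \<in> P \<and> q \<in> Q} \<in> K"
    by (rule coh_K3[OF K P Q]) (use fg in \<open>auto simp: lam_def\<close>)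
  moreover have "{(\<lambda>x. fst (lam (p,q)) * p x + snd (lam (p,q)) * q x) | p q. p \<in> P \<and> q \<in> Q}
      = (P - {a}) \<union> (\<lambda>q. (\<lambda>x. f q * a x + g q * q x)) ` Q"
  proof
    show "{(\<lambda>x. fst (lam (p,q)) * p x + snd (lam (p,q)) * q x) | p q. p \<in> P \<and> q \<in> Q}
      \<subseteq> (P - {a}) \<union> (\<lambda>q. (\<lambda>x. f q * a x + g q * q x)) ` Q"
      by (auto simp: lam_def)
  next
    obtain q0 where q0: "q0 \<in> Q" using coh_ne[OF K Q] by auto
    show "(P - {a}) \<union> (\<lambda>q. (\<lambda>x. f q * a x + g q * q x)) ` Q \<subseteq>
      {(\<lambda>x. fst (lam (p,q)) * p x + snd (lam (p,q)) * q x) | p q. p \<in> P \<and> q \<in> Q}"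
    proof
      fix y assume "y \<in> (P - {a}) \<union> (\<lambda>q. (\<lambda>x. f q * a x + g q * q x)) ` Q"
      then consider "y \<in> P" "y \<noteq> a" | q where "q \<in> Q" "y = (\<lambda>x. f q * a x + g q * q x)" by auto
      then show "y \<in> {(\<lambda>x. fst (lam (p,q)) * p x + snd (lam (p,q)) * q x) | p q. p \<in> P \<and> q \<in> Q}"
      proof cases
        case 1
        then have "y = (\<lambda>x. fst (lam (y,q0)) * y x + snd (lam (y,q0)) * q0 x)" by (simp add: lam_def)
        then show ?thesis using 1 q0 by blast
      next
        case 2
        then show ?thesis using a by (auto simp: lam_def)
      qed
    qed
  qed
  ultimately show ?thesis by simp
qed

lemma coh_iter:
  assumes K: "coherent K" and R: "finite R"
    and step: "\<And>a P. a \<in> R \<Longrightarrow> P \<in> K \<Longrightarrow> a \<in> P \<Longrightarrow> \<exists>Ou. Ou \<subseteq> T \<and> (P - {a}) \<union> Ou \<in> K"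
  shows "D \<subseteq> T \<Longrightarrow> D \<union> R \<in> K \<Longrightarrow> \<exists>D'. D' \<subseteq> T \<and> D' \<in> K"
  using R step
proof (induction R arbitrary: D)
  case empty
  then show ?case by auto
next
  case (insert a R)
  have "a \<in> D \<union> insert a R" by simp
  then obtain Ou where Ou: "Ou \<subseteq> T" "(D \<union> insert a R - {a}) \<union> Ou \<in> K"
    using insert.prems by blast
  have eq: "(D \<union> insert a R - {a}) \<union> Ou = ((D - {a}) \<union> Ou) \<union> R"
    using insert.hyps by auto
  show ?case
    by (rule insert.IH[of "(D - {a}) \<union> Ou"]) (use insert.prems Ou eq in auto)
qed


lemma PiE_upd_Suc:
  assumes "w \<in> PiE {..<n} A" "a \<in> A n"
  shows "w(n := a) \<in> PiE {..<Suc n} A"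
  using assms by (auto simp: PiE_iff extensional_def)

lemma finite_PiE_opt: "(\<forall>j<(n::nat). finite (A j)) \<Longrightarrow> finite (PiE {..<n} A)"
proof -
  assume h: "\<forall>j<n. finite (A j)"
  have "finite (PiE {..<n} (\<lambda>i. A i))" by (rule finite_PiE) (use h in auto)
  then show ?thesis by simp
qed

lemma posi_in_K:
  assumes K: "coherent K"
  shows "(\<forall>j<n. A j \<in> K) \<Longrightarrow> validlam n A lam \<Longrightarrow> comb n lam ` PiE {..<n} A \<in> K"
proof (induction n arbitrary: lam)
  case 0
  have "(\<lambda>_. undefined) \<in> PiE {..<0::nat} A" by auto
  then show ?case using 0 by (auto simp: validlam_def)
next
  case (Suc n)
  define T where "T = comb (Suc n) lam ` PiE {..<Suc n} A"
  have finT: "finite T" unfolding T_def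
    using Suc.prems coh_fin[OF K] by (intro finite_imageI finite_PiE_opt) auto
  have An: "A n \<in> K" using Suc.prems by auto
  have finAn: "finite (A n)" using coh_fin[OF K An] .
  have stepR: "\<exists>Ou. Ou \<subseteq> T \<and> (P - {a}) \<union> Ou \<in> K" if a: "a \<in> A n" and P: "P \<in> K" and aP: "a \<in> P" for a P
  proof -
    define s where "s w = (\<Sum>j<n. lam (w(n:=a)) j)" for w
    define cf where "cf w = (\<lambda>x. \<Sum>j<n. lam (w(n:=a)) j * w j x)" for w
    define Prop where "Prop q w \<longleftrightarrow> w \<in> PiE {..<n} A \<and> (0 < s w \<longrightarrow> q = cf w)" for q w
    have sge: "s w \<ge> 0" if "w \<in> PiE {..<n} A" for w
    proof -
      have "w(n:=a) \<in> PiE {..<Suc n} A" using PiE_upd_Suc[OF that a] .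
      then have "\<forall>j<Suc n. lam (w(n:=a)) j \<ge> 0" using validlamD(1)[OF Suc.prems(2)] by blast
      then show ?thesis unfolding s_def by (intro sum_nonneg) auto
    qed
    obtain Q where Q: "Q \<in> K" and QP: "\<forall>q\<in>Q. \<exists>w. Prop q w"
    proof (cases "n = 0")
      case True
      have "(\<lambda>_. 1) \<in> (Vpos :: 'a opt set)"
        unfolding Vpos_def by (auto simp: less_fun_def le_fun_def)
      then have "{\<lambda>_. 1} \<in> K" using coh_pos[OF K] by blast
      moreover have "Prop q (\<lambda>_. undefined)" for q
        using True by (auto simp: Prop_def s_def)
      ultimately show ?thesis by (intro that[of "{\<lambda>_. 1}"]) auto
    next
      case False
      define mu where "mu w j = (if s w > 0 then lam (w(n:=a)) j else 1)" for w j
      have "validlam n A mu"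
        unfolding validlam_def
      proof
        fix w assume w: "w \<in> PiE {..<n} A"
        have "w(n:=a) \<in> PiE {..<Suc n} A" using PiE_upd_Suc[OF w a] .
        then have "\<forall>j<Suc n. lam (w(n:=a)) j \<ge> 0" using validlamD(1)[OF Suc.prems(2)] by blast
        then show "(\<forall>j<n. mu w j \<ge> 0) \<and> (\<Sum>j<n. mu w j) > 0"
        proof (cases "0 < s w")
          case True
          then show ?thesis using \<open>\<forall>j<Suc n. lam (w(n:=a)) j \<ge> 0\<close> by (auto simp: mu_def s_def)
        next
          case F: False
          then show ?thesis using False by (auto simp: mu_def)
        qed
      qed
      moreover have "\<forall>j<n. A j \<in> K" using Suc.prems(1) by simp
      ultimately have "comb n mu ` PiE {..<n} A \<in> K" using Suc.IH by blast
      moreover have "\<forall>q\<in>comb n mu ` PiE {..<n} A. \<exists>w. Prop q w"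
      proof
        fix q assume "q \<in> comb n mu ` PiE {..<n} A"
        then obtain w where w: "w \<in> PiE {..<n} A" "q = comb n mu w" by blast
        have "Prop q w" unfolding Prop_def
        proof (intro conjI impI)
          show "w \<in> PiE {..<n} A" by (rule w(1))
          assume "0 < s w"
          then show "q = cf w" unfolding w(2) comb_def cf_def mu_def by simp
        qed
        then show "\<exists>w. Prop q w" by blast
      qed
      ultimately show ?thesis by (rule that)
    qed
    define W where "W q = (SOME w. Prop q w)" for q
    have W: "Prop q (W q)" if "q \<in> Q" for q
      proof -
      have "\<exists>w. Prop q w" using QP that by (rule bspec)
      then show ?thesis unfolding W_def by (rule someI_ex)
    qed
    define f where "f q = lam ((W q)(n:=a)) n" for q
    define g where "g q = (if s (W q) > 0 then 1 else (0::real))" for q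
    have fg: "\<forall>q\<in>Q. f q \<ge> 0 \<and> g q \<ge> 0 \<and> f q + g q > 0"
    proof
      fix q assume q: "q \<in> Q"
      have w: "W q \<in> PiE {..<n} A" using W[OF q] by (simp add: Prop_def)
      have u: "(W q)(n:=a) \<in> PiE {..<Suc n} A" using PiE_upd_Suc[OF w a] .
      then have l: "\<forall>j<Suc n. lam ((W q)(n:=a)) j \<ge> 0" "(\<Sum>j<Suc n. lam ((W q)(n:=a)) j) > 0"
        using validlamD[OF Suc.prems(2)] by blast+
      show "f q \<ge> 0 \<and> g q \<ge> 0 \<and> f q + g q > 0"
        using l sge[OF w] by (auto simp: f_def g_def s_def)
    qed
    have sub: "(\<lambda>q. (\<lambda>x. f q * a x + g q * q x)) ` Q \<subseteq> T"
    proof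
      fix y assume "y \<in> (\<lambda>q. (\<lambda>x. f q * a x + g q * q x)) ` Q"
      then obtain q where q: "q \<in> Q" and y: "y = (\<lambda>x. f q * a x + g q * q x)" by auto
      define w where "w = W q"
      have w: "w \<in> PiE {..<n} A" and wq: "0 < s w \<Longrightarrow> q = cf w"
        using W[OF q] by (auto simp: Prop_def w_def)
      define u where "u = w(n:=a)"
      have u: "u \<in> PiE {..<Suc n} A" using PiE_upd_Suc[OF w a] by (simp add: u_def)
      have lnn: "\<forall>j<Suc n. lam u j \<ge> 0"
        using validlamD(1)[OF Suc.prems(2) u] .
      have uj: "u j = w j" if "j < n" for j using that by (simp add: u_def)
      have cu: "comb (Suc n) lam u = (\<lambda>x. (\<Sum>j<n. lam u j * w j x) + lam u n * a x)"
        by (simp add: comb_def uj u_def)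
      have fq: "f q = lam u n" by (simp add: f_def u_def w_def)
      have gq: "g q = (if 0 < s w then 1 else 0)" by (simp add: g_def w_def)
      have "y = comb (Suc n) lam u"
      proof (cases "0 < s w")
        case True
        then have qe: "q = (\<lambda>x. \<Sum>j<n. lam u j * w j x)" using wq by (simp add: cf_def u_def)
        have "y = (\<lambda>x. lam u n * a x + q x)" using True by (simp add: y fq gq)
        also have "\<dots> = comb (Suc n) lam u" unfolding cu qe by (simp add: algebra_simps)
        finally show ?thesis .
      next
        case False
        then have "s w = 0" using sge[OF w] by simp
        then have "\<forall>j\<in>{..<n}. lam u j = 0"
          using lnn by (subst (asm) s_def, subst (asm) sum_nonneg_eq_0_iff) (auto simp: u_def)
        then show ?thesis unfolding y cu fq gq using False by simp
      qed
      then show "y \<in> T" using u by (simp add: T_def)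
    qed
    show ?thesis using coh_subst[OF K P Q aP fg] sub by blast
  qed
  obtain D' where "D' \<subseteq> T" "D' \<in> K"
    using coh_iter[OF K finAn stepR, of "{}"] An by auto
  then have "D' \<union> T \<in> K" using coh_union[OF K _ finT] by blast
  then show ?case using \<open>D' \<subseteq> T\<close> by (simp add: T_def sup_absorb2)
qed


lemma le_opt: "(t::'x opt) \<le> s \<longleftrightarrow> (\<forall>x. t x \<le> s x)"
  by (simp add: le_fun_def)

lemma pos_opt_iff: "(0::'x opt) < u \<longleftrightarrow> (\<forall>x. 0 \<le> u x) \<and> (\<exists>x. 0 < u x)"
  by (auto simp: less_fun_def le_fun_def not_le)

lemma coh_dom:
  assumes K: "coherent K" and T: "T \<in> K" and S: "finite S"
    and dom: "\<forall>t\<in>T. \<exists>s\<in>S \<union> {0}. t \<le> s"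
  shows "S \<in> K"
proof -
  have "\<forall>t\<in>T. \<exists>s. s \<in> S \<union> {0} \<and> t \<le> s" using dom by blast
  from bchoice[OF this] obtain sel where sel: "\<forall>t\<in>T. sel t \<in> S \<union> {0} \<and> t \<le> sel t" by blast
  have step: "\<exists>Ou. Ou \<subseteq> S \<union> {0} \<and> (P - {a}) \<union> Ou \<in> K" if a: "a \<in> T" and P: "P \<in> K" and aP: "a \<in> P" for a P
  proof (cases "a = sel a")
    case True
    then have "(P - {a}) \<union> {sel a} = P" using aP by auto
    moreover have "{sel a} \<subseteq> S \<union> {0}" using sel a by blast
    ultimately show ?thesis using P by metis
  next
    case False
    have le: "a \<le> sel a" using sel a by blast
    have "(0::'a opt) < sel a - a"
      unfolding pos_opt_iff
    proof
      show "\<forall>x. 0 \<le> (sel a - a) x" using le by (simp add: le_opt)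
      from False obtain x where "a x \<noteq> sel a x" by auto
      moreover have "a x \<le> sel a x" using le by (simp add: le_opt)
      ultimately have "0 < (sel a - a) x" by simp
      then show "\<exists>x. 0 < (sel a - a) x" ..
    qed
    then have Q: "{sel a - a} \<in> K" using coh_pos[OF K] by (simp add: Vpos_def)
    have "(P - {a}) \<union> (\<lambda>q. (\<lambda>x. 1 * a x + 1 * q x)) ` {sel a - a} \<in> K"
      by (rule coh_subst[OF K P Q aP]) auto
    moreover have "(\<lambda>q. (\<lambda>x. 1 * a x + 1 * q x)) ` {sel a - a} = {sel a}" by auto
    moreover have "{sel a} \<subseteq> S \<union> {0}" using sel a by blast
    ultimately show ?thesis by metis
  qed
  have finT: "finite T" using coh_fin[OF K T] .
  obtain D' where D': "D' \<subseteq> S \<union> {0}" "D' \<in> K"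
    using coh_iter[OF K finT step, of "{}"] T by auto
  have "D' \<union> S \<in> K" using coh_union[OF K D'(2) S] .
  then have "(D' \<union> S) - {0} \<in> K" using coh_minus0[OF K] by blast
  then have "((D' \<union> S) - {0}) \<union> S \<in> K" using coh_union[OF K _ S] by blast
  moreover have "((D' \<union> S) - {0}) \<union> S = S" using D'(1) by auto
  ultimately show ?thesis by simp
qed


definition RHS :: "nat \<Rightarrow> (nat \<Rightarrow> 'x opt set) \<Rightarrow> 'x opt set \<Rightarrow> bool" where
  "RHS n A S \<longleftrightarrow> (S \<inter> Vpos \<noteq> {} \<or> (n \<noteq> 0 \<and> (\<exists>T\<in>Posi' n A. \<forall>t\<in>T. \<exists>s\<in>S \<union> {0}. t \<le> s)))"

lemma R_A: assumes "j < n" shows "RHS n A (A j)"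
proof -
  define lam where "lam = (\<lambda>(u::nat \<Rightarrow> 'a opt) i. if i = j then (1::real) else 0)"
  have v: "validlam n A lam" unfolding validlam_def lam_def using assms by auto
  have c: "comb n lam u = u j" for u
  proof
    fix x
    have e: "(\<Sum>i<n. lam u i * u i x) = (\<Sum>i<n. if i = j then u i x else 0)"
      by (rule sum.cong) (auto simp: lam_def)
    show "comb n lam u x = u j x" unfolding comb_def e using assms by (simp add: sum.delta')
  qed
  have "comb n lam ` PiE {..<n} A \<in> Posi' n A" unfolding posi'_iff using v by blast
  moreover have "\<forall>t\<in>comb n lam ` PiE {..<n} A. \<exists>s\<in>A j \<union> {0}. t \<le> s"
    using assms by (auto simp: c PiE_iff)
  ultimately have "\<exists>T\<in>Posi' n A. \<forall>t\<in>T. \<exists>s\<in>A j \<union> {0}. t \<le> s" by blast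
  then show ?thesis unfolding RHS_def using assms by simp
qed

lemma R_pos: "u \<in> Vpos \<Longrightarrow> RHS n A {u}"
  unfolding RHS_def by auto

lemma R_union: "RHS n A B \<Longrightarrow> RHS n A (B \<union> Q)"
  unfolding RHS_def by blast

lemma R_minus0: "RHS n A B \<Longrightarrow> RHS n A (B - {0})"
proof -
  have "(0::'a opt) \<notin> Vpos" by (simp add: Vpos_def)
  moreover have "(B - {0}) \<union> {0} = B \<union> {0}" by auto
  moreover have "(B - {0}) \<inter> Vpos = B \<inter> Vpos" using calculation(1) by blast
  ultimately show "RHS n A B \<Longrightarrow> RHS n A (B - {0})" unfolding RHS_def by simp
qed

lemma R_zero_all: "RHS n A {0} \<Longrightarrow> RHS n A S"
proof -
  assume "RHS n A {0}"
  moreover have "{0} \<inter> Vpos = ({}::'a opt set)" by (simp add: Vpos_def)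
  ultimately have "n \<noteq> 0" "\<exists>T\<in>Posi' n A. \<forall>t\<in>T. t \<le> 0" unfolding RHS_def by auto
  then show "RHS n A S" unfolding RHS_def by blast
qed


lemma posi_combine:
  assumes la: "validlam n A la" and lb: "validlam n A lb"
    and ab: "\<forall>u\<in>PiE {..<n} A. \<alpha> u \<ge> 0 \<and> \<beta> u \<ge> 0 \<and> \<alpha> u + \<beta> u > 0"
  shows "(\<lambda>u. (\<lambda>x. \<alpha> u * comb n la u x + \<beta> u * comb n lb u x)) ` PiE {..<n} A \<in> Posi' n A"
proof -
  define lc where "lc u j = \<alpha> u * la u j + \<beta> u * lb u j" for u j
  have "validlam n A lc"
    unfolding validlam_def
  proof
    fix u assume u: "u \<in> PiE {..<n} A"
    note a = validlamD[OF la u] and b = validlamD[OF lb u]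
    have ab': "\<alpha> u \<ge> 0" "\<beta> u \<ge> 0" "\<alpha> u + \<beta> u > 0" using ab u by auto
    have s: "(\<Sum>j<n. lc u j) = \<alpha> u * (\<Sum>j<n. la u j) + \<beta> u * (\<Sum>j<n. lb u j)"
      by (simp add: lc_def sum.distrib sum_distrib_left)
    have "\<alpha> u * (\<Sum>j<n. la u j) + \<beta> u * (\<Sum>j<n. lb u j) > 0"
    proof (cases "\<alpha> u > 0")
      case True
      then have "\<alpha> u * (\<Sum>j<n. la u j) > 0" using a(2) by simp
      moreover have "\<beta> u * (\<Sum>j<n. lb u j) \<ge> 0" using ab'(2) b(2) by simp
      ultimately show ?thesis by linarith
    next
      case False
      then have "\<beta> u > 0" "\<alpha> u = 0" using ab' by auto
      then show ?thesis using b(2) by simp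
    qed
    then show "(\<forall>j<n. lc u j \<ge> 0) \<and> (\<Sum>j<n. lc u j) > 0"
      using a(1) b(1) ab' s by (simp add: lc_def)
  qed
  then have "comb n lc ` PiE {..<n} A \<in> Posi' n A" unfolding posi'_iff by blast
  moreover have "comb n lc u = (\<lambda>x. \<alpha> u * comb n la u x + \<beta> u * comb n lb u x)" for u
    by (simp add: comb_def lc_def sum.distrib sum_distrib_left algebra_simps)
  ultimately show ?thesis by simp
qed

lemma pos_fun: "(\<forall>x. 0 \<le> (f::'x opt) x) \<Longrightarrow> 0 < f y \<Longrightarrow> f \<in> Vpos"
  unfolding Vpos_def pos_opt_iff by auto

lemma Vpos_D: "u \<in> Vpos \<Longrightarrow> (\<forall>x. 0 \<le> u x) \<and> (\<exists>x. 0 < u x)"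
  unfolding Vpos_def pos_opt_iff by auto

lemma posi_finite: "finite A \<Longrightarrow> finite B \<Longrightarrow> finite {(f a b :: 'c) | a b. a \<in> A \<and> b \<in> B}"
proof -
  assume "finite A" "finite B"
  then have "finite ((\<lambda>(a,b). f a b) ` (A \<times> B))" by simp
  moreover have "{f a b | a b. a \<in> A \<and> b \<in> B} = (\<lambda>(a,b). f a b) ` (A \<times> B)" by auto
  ultimately show ?thesis by simp
qed


lemma validlam_n: "validlam n A la \<Longrightarrow> n \<noteq> 0"
proof
  assume "validlam n A la" "n = 0"
  moreover have "(\<lambda>_. undefined) \<in> PiE {..<0::nat} A" by auto
  ultimately show False by (auto simp: validlam_def)
qed

lemma R_final:
  assumes la: "validlam n A la" and lb: "validlam n A lb"
    and ab: "\<forall>u\<in>PiE {..<n} A. \<alpha> u \<ge> 0 \<and> \<beta> u \<ge> 0 \<and> \<alpha> u + \<beta> u > 0"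
    and d: "\<forall>u\<in>PiE {..<n} A. \<exists>s\<in>C \<union> {0}. (\<lambda>x. \<alpha> u * comb n la u x + \<beta> u * comb n lb u x) \<le> s"
  shows "RHS n A C"
proof -
  have "(\<lambda>u. (\<lambda>x. \<alpha> u * comb n la u x + \<beta> u * comb n lb u x)) ` PiE {..<n} A \<in> Posi' n A"
    by (rule posi_combine[OF la lb ab])
  moreover have "\<forall>t\<in>(\<lambda>u. (\<lambda>x. \<alpha> u * comb n la u x + \<beta> u * comb n lb u x)) ` PiE {..<n} A. \<exists>s\<in>C \<union> {0}. t \<le> s"
    using d by blast
  ultimately show ?thesis unfolding RHS_def using validlam_n[OF la] by blast
qed

lemma dom_extract:
  assumes "n \<noteq> 0 \<and> (\<exists>T\<in>Posi' n A. \<forall>t\<in>T. \<exists>s\<in>B \<union> {0}. t \<le> s)"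
  shows "\<exists>la sel. validlam n A la \<and> (\<forall>u\<in>PiE {..<n} A. sel u \<in> B \<union> {0} \<and> comb n la u \<le> sel u)"
proof -
  obtain T where T: "T \<in> Posi' n A" and d: "\<forall>t\<in>T. \<exists>s\<in>B \<union> {0}. t \<le> s" using assms by blast
  obtain la where la: "validlam n A la" and Te: "T = comb n la ` PiE {..<n} A"
    using T unfolding posi'_iff by blast
  have "\<forall>u\<in>PiE {..<n} A. \<exists>s. s \<in> B \<union> {0} \<and> comb n la u \<le> s" using d Te by blast
  from bchoice[OF this] obtain sel where "\<forall>u\<in>PiE {..<n} A. sel u \<in> B \<union> {0} \<and> comb n la u \<le> sel u" by blast
  then show ?thesis using la by blast
qed

lemma lin_le:
  assumes "t1 \<le> s1" "t2 \<le> (s2::'x opt)" "(a::real) \<ge> 0" "b \<ge> 0"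
  shows "(\<lambda>x. a * t1 x + b * t2 x) \<le> (\<lambda>x. a * s1 x + b * s2 x)"
  unfolding le_opt
proof
  fix x
  have "t1 x \<le> s1 x" "t2 x \<le> s2 x" using assms(1,2) by (auto simp: le_opt)
  then show "a * t1 x + b * t2 x \<le> a * s1 x + b * s2 x"
    using assms(3,4) by (intro add_mono mult_left_mono)
qed

lemma R_K3:
  assumes R1: "RHS n A B1" and R2: "RHS n A B2"
    and L: "\<forall>a\<in>B1. \<forall>b\<in>B2. fst (L (a,b)) \<ge> 0 \<and> snd (L (a,b)) \<ge> 0 \<and> fst (L(a,b)) + snd (L(a,b)) > 0"
  shows "RHS n A {(\<lambda>x. fst (L (a,b)) * a x + snd (L (a,b)) * b x) | a b. a \<in> B1 \<and> b \<in> B2}"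
proof -
  define cm where "cm a b = (\<lambda>x. fst (L (a,b)) * a x + snd (L (a,b)) * b x)" for a b
  define C where "C = {cm a b | a b. a \<in> B1 \<and> b \<in> B2}"
  have C_eq: "{(\<lambda>x. fst (L (a,b)) * a x + snd (L (a,b)) * b x) | a b. a \<in> B1 \<and> b \<in> B2} = C"
    by (simp add: C_def cm_def)
  have inC: "cm a b \<in> C" if "a \<in> B1" "b \<in> B2" for a b using that by (auto simp: C_def)
  have cmpos: "RHS n A C" if ab: "a \<in> B1" "b \<in> B2" and nn: "\<forall>x. 0 \<le> cm a b x" and p: "0 < cm a b y" for a b y
  proof -
    have "cm a b \<in> Vpos" using pos_fun[OF nn p] .
    then show ?thesis using inC[OF ab] unfolding RHS_def by blast
  qed
  have cmle: "(\<lambda>x. fst (L (a,b)) * t1 x + snd (L (a,b)) * t2 x) \<le> cm a b"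
    if "a \<in> B1" "b \<in> B2" "t1 \<le> a" "t2 \<le> b" for a b t1 t2
    unfolding cm_def using L that by (intro lin_le) auto
  have le0: "(\<lambda>x. 1 * t x + 0 * t' x) \<le> 0" "(\<lambda>x. 0 * t' x + 1 * t x) \<le> 0" if "t \<le> 0" for t t' :: "'a opt"
    using that by (auto simp: le_opt)
  have z0: "(0::'a opt) \<in> C \<union> {0}" by simp
  show ?thesis
    unfolding C_eq
  proof (cases "B1 \<inter> Vpos \<noteq> {}")
    case P1: True
    then obtain a0 where a0: "a0 \<in> B1" "a0 \<in> Vpos" by auto
    have a0p: "\<forall>x. 0 \<le> a0 x" "\<exists>x. 0 < a0 x" using Vpos_D[OF a0(2)] by auto
    show "RHS n A C"
    proof (cases "B2 \<inter> Vpos \<noteq> {}")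
      case True
      then obtain b0 where b0: "b0 \<in> B2" "b0 \<in> Vpos" by auto
      have b0p: "\<forall>x. 0 \<le> b0 x" "\<exists>x. 0 < b0 x" using Vpos_D[OF b0(2)] by auto
      have Lab: "fst (L (a0,b0)) \<ge> 0" "snd (L (a0,b0)) \<ge> 0" "fst (L(a0,b0)) + snd (L(a0,b0)) > 0"
        using L a0 b0 by auto
      have nn: "\<forall>x. 0 \<le> cm a0 b0 x" using a0p b0p Lab by (simp add: cm_def)
      show ?thesis
      proof (cases "fst (L (a0,b0)) > 0")
        case True
        obtain y where "0 < a0 y" using a0p by auto
        then have "0 < cm a0 b0 y" using True Lab b0p by (simp add: cm_def add_pos_nonneg)
        then show ?thesis using cmpos[OF a0(1) b0(1) nn] by blast
      next
        case False
        then have sp: "snd (L (a0,b0)) > 0" using Lab by auto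
        obtain y where "0 < b0 y" using b0p by auto
        then have "0 < cm a0 b0 y" using sp Lab a0p by (simp add: cm_def add_nonneg_pos)
        then show ?thesis using cmpos[OF a0(1) b0(1) nn] by blast
      qed
    next
      case False
      then have "n \<noteq> 0 \<and> (\<exists>T\<in>Posi' n A. \<forall>t\<in>T. \<exists>s\<in>B2 \<union> {0}. t \<le> s)" using R2 unfolding RHS_def by blast
      from dom_extract[OF this] obtain lb sel where lb: "validlam n A lb"
        and sel: "\<forall>u\<in>PiE {..<n} A. sel u \<in> B2 \<union> {0} \<and> comb n lb u \<le> sel u" by blast
      show ?thesis
      proof (cases "\<exists>b\<in>B2. snd (L (a0,b)) = 0")
        case True
        then obtain b where b: "b \<in> B2" "snd (L (a0,b)) = 0" by auto
        then have fp: "fst (L (a0,b)) > 0" using L a0 by force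
        have nn: "\<forall>x. 0 \<le> cm a0 b x" using a0p b fp by (simp add: cm_def)
        obtain y where "0 < a0 y" using a0p by auto
        then have "0 < cm a0 b y" using fp b by (simp add: cm_def)
        then show ?thesis using cmpos[OF a0(1) b(1) nn] by blast
      next
        case False
        define \<beta> where "\<beta> u = (if sel u = 0 then 1 else snd (L (a0, sel u)))" for u
        show ?thesis
        proof (rule R_final[OF lb lb, of "\<lambda>_. 0" \<beta>])
          show "\<forall>u\<in>PiE {..<n} A. 0 \<le> (0::real) \<and> 0 \<le> \<beta> u \<and> 0 < 0 + \<beta> u"
          proof
            fix u assume u: "u \<in> PiE {..<n} A"
            have "sel u \<noteq> 0 \<Longrightarrow> sel u \<in> B2" using sel u by blast
            then show "0 \<le> (0::real) \<and> 0 \<le> \<beta> u \<and> 0 < 0 + \<beta> u"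
              using False L a0 by (auto simp: \<beta>_def) (metis less_eq_real_def)
          qed
          show "\<forall>u\<in>PiE {..<n} A. \<exists>s\<in>C \<union> {0}. (\<lambda>x. 0 * comb n lb u x + \<beta> u * comb n lb u x) \<le> s"
          proof
            fix u assume u: "u \<in> PiE {..<n} A"
            have su: "sel u \<in> B2 \<union> {0}" "comb n lb u \<le> sel u" using sel u by auto
            show "\<exists>s\<in>C \<union> {0}. (\<lambda>x. 0 * comb n lb u x + \<beta> u * comb n lb u x) \<le> s"
            proof (cases "sel u = 0")
              case True
              then have "(\<lambda>x. 0 * comb n lb u x + \<beta> u * comb n lb u x) \<le> 0"
                using su(2) by (simp add: \<beta>_def le_opt)
              then show ?thesis using z0 by blast
            next
              case F: False
              then have sB: "sel u \<in> B2" using su by auto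
              have "(\<lambda>x. fst (L (a0, sel u)) * 0 x + snd (L (a0, sel u)) * comb n lb u x) \<le> cm a0 (sel u)"
                by (rule cmle[OF a0(1) sB _ su(2)]) (use a0p in \<open>simp add: le_opt\<close>)
              then have "(\<lambda>x. 0 * comb n lb u x + \<beta> u * comb n lb u x) \<le> cm a0 (sel u)"
                using F by (simp add: \<beta>_def)
              then show ?thesis using inC[OF a0(1) sB] by blast
            qed
          qed
        qed
      qed
    qed
  next
    case NP1: False
    then have "n \<noteq> 0 \<and> (\<exists>T\<in>Posi' n A. \<forall>t\<in>T. \<exists>s\<in>B1 \<union> {0}. t \<le> s)" using R1 unfolding RHS_def by blast
    from dom_extract[OF this] obtain la sel1 where la: "validlam n A la"
      and sel1: "\<forall>u\<in>PiE {..<n} A. sel1 u \<in> B1 \<union> {0} \<and> comb n la u \<le> sel1 u" by blast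
    show "RHS n A C"
    proof (cases "B2 \<inter> Vpos \<noteq> {}")
      case True
      then obtain b0 where b0: "b0 \<in> B2" "b0 \<in> Vpos" by auto
      have b0p: "\<forall>x. 0 \<le> b0 x" "\<exists>x. 0 < b0 x" using Vpos_D[OF b0(2)] by auto
      show ?thesis
      proof (cases "\<exists>a\<in>B1. fst (L (a,b0)) = 0")
        case True
        then obtain a where a: "a \<in> B1" "fst (L (a,b0)) = 0" by auto
        then have sp: "snd (L (a,b0)) > 0" using L b0 by force
        have nn: "\<forall>x. 0 \<le> cm a b0 x" using b0p a sp by (simp add: cm_def)
        obtain y where "0 < b0 y" using b0p by auto
        then have "0 < cm a b0 y" using sp a by (simp add: cm_def)
        then show ?thesis using cmpos[OF a(1) b0(1) nn] by blast
      next
        case False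
        define \<alpha> where "\<alpha> u = (if sel1 u = 0 then 1 else fst (L (sel1 u, b0)))" for u
        show ?thesis
        proof (rule R_final[OF la la, of \<alpha> "\<lambda>_. 0"])
          show "\<forall>u\<in>PiE {..<n} A. 0 \<le> \<alpha> u \<and> 0 \<le> (0::real) \<and> 0 < \<alpha> u + 0"
          proof
            fix u assume u: "u \<in> PiE {..<n} A"
            have "sel1 u \<noteq> 0 \<Longrightarrow> sel1 u \<in> B1" using sel1 u by blast
            then show "0 \<le> \<alpha> u \<and> 0 \<le> (0::real) \<and> 0 < \<alpha> u + 0"
              using False L b0 by (auto simp: \<alpha>_def) (metis less_eq_real_def)
          qed
          show "\<forall>u\<in>PiE {..<n} A. \<exists>s\<in>C \<union> {0}. (\<lambda>x. \<alpha> u * comb n la u x + 0 * comb n la u x) \<le> s"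
          proof
            fix u assume u: "u \<in> PiE {..<n} A"
            have su: "sel1 u \<in> B1 \<union> {0}" "comb n la u \<le> sel1 u" using sel1 u by auto
            show "\<exists>s\<in>C \<union> {0}. (\<lambda>x. \<alpha> u * comb n la u x + 0 * comb n la u x) \<le> s"
            proof (cases "sel1 u = 0")
              case True
              then have "(\<lambda>x. \<alpha> u * comb n la u x + 0 * comb n la u x) \<le> 0"
                using su(2) by (simp add: \<alpha>_def le_opt)
              then show ?thesis using z0 by blast
            next
              case F: False
              then have sB: "sel1 u \<in> B1" using su by auto
              have "(\<lambda>x. fst (L (sel1 u, b0)) * comb n la u x + snd (L (sel1 u, b0)) * 0 x) \<le> cm (sel1 u) b0"
                by (rule cmle[OF sB b0(1) su(2)]) (use b0p in \<open>simp add: le_opt\<close>)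
              then have "(\<lambda>x. \<alpha> u * comb n la u x + 0 * comb n la u x) \<le> cm (sel1 u) b0"
                using F by (simp add: \<alpha>_def)
              then show ?thesis using inC[OF sB b0(1)] by blast
            qed
          qed
        qed
      qed
    next
      case False
      then have "n \<noteq> 0 \<and> (\<exists>T\<in>Posi' n A. \<forall>t\<in>T. \<exists>s\<in>B2 \<union> {0}. t \<le> s)" using R2 unfolding RHS_def by blast
      from dom_extract[OF this] obtain lb sel2 where lb: "validlam n A lb"
        and sel2: "\<forall>u\<in>PiE {..<n} A. sel2 u \<in> B2 \<union> {0} \<and> comb n lb u \<le> sel2 u" by blast
      define \<alpha> where "\<alpha> u = (if sel1 u = 0 then 1 else if sel2 u = 0 then 0 else fst (L (sel1 u, sel2 u)))" for u
      define \<beta> where "\<beta> u = (if sel1 u = 0 then 0 else if sel2 u = 0 then 1 else snd (L (sel1 u, sel2 u)))" for u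
      show ?thesis
      proof (rule R_final[OF la lb, of \<alpha> \<beta>])
        show "\<forall>u\<in>PiE {..<n} A. 0 \<le> \<alpha> u \<and> 0 \<le> \<beta> u \<and> 0 < \<alpha> u + \<beta> u"
        proof
          fix u assume u: "u \<in> PiE {..<n} A"
          have "sel1 u \<noteq> 0 \<Longrightarrow> sel1 u \<in> B1" "sel2 u \<noteq> 0 \<Longrightarrow> sel2 u \<in> B2" using sel1 sel2 u by blast+
          then show "0 \<le> \<alpha> u \<and> 0 \<le> \<beta> u \<and> 0 < \<alpha> u + \<beta> u"
            using L by (auto simp: \<alpha>_def \<beta>_def)
        qed
        show "\<forall>u\<in>PiE {..<n} A. \<exists>s\<in>C \<union> {0}. (\<lambda>x. \<alpha> u * comb n la u x + \<beta> u * comb n lb u x) \<le> s"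
        proof
          fix u assume u: "u \<in> PiE {..<n} A"
          have su1: "sel1 u \<in> B1 \<union> {0}" "comb n la u \<le> sel1 u" using sel1 u by auto
          have su2: "sel2 u \<in> B2 \<union> {0}" "comb n lb u \<le> sel2 u" using sel2 u by auto
          show "\<exists>s\<in>C \<union> {0}. (\<lambda>x. \<alpha> u * comb n la u x + \<beta> u * comb n lb u x) \<le> s"
          proof (cases "sel1 u = 0")
            case True
            then have "(\<lambda>x. \<alpha> u * comb n la u x + \<beta> u * comb n lb u x) \<le> 0"
              using su1(2) by (simp add: \<alpha>_def \<beta>_def le_opt)
            then show ?thesis using z0 by blast
          next
            case F1: False
            show ?thesis
            proof (cases "sel2 u = 0")
              case True
              then have "(\<lambda>x. \<alpha> u * comb n la u x + \<beta> u * comb n lb u x) \<le> 0"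
                using su2(2) F1 by (simp add: \<alpha>_def \<beta>_def le_opt)
              then show ?thesis using z0 by blast
            next
              case F2: False
              have sB1: "sel1 u \<in> B1" using su1 F1 by auto
              have sB2: "sel2 u \<in> B2" using su2 F2 by auto
              have "(\<lambda>x. fst (L (sel1 u, sel2 u)) * comb n la u x + snd (L (sel1 u, sel2 u)) * comb n lb u x) \<le> cm (sel1 u) (sel2 u)"
                by (rule cmle[OF sB1 sB2 su1(2) su2(2)])
              then have "(\<lambda>x. \<alpha> u * comb n la u x + \<beta> u * comb n lb u x) \<le> cm (sel1 u) (sel2 u)"
                using F1 F2 by (simp add: \<alpha>_def \<beta>_def)
              then show ?thesis using inC[OF sB1 sB2] by blast
            qed
          qed
        qed
      qed
    qed
  qed
qed

theorem mainTheorem19: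
  fixes n :: nat and A :: "nat \<Rightarrow> ('x \<Rightarrow> real) set" and S :: "('x \<Rightarrow> real) set"
  assumes "\<forall>j<n. A j \<in> optsets"
    and "S \<in> optsets"
  shows "S \<in> Ex (A ` {..<n}) \<longleftrightarrow>
           (S \<inter> Vpos \<noteq> {} \<or>
            (n \<noteq> 0 \<and> (\<exists>T\<in>Posi' n A. \<forall>t\<in>T. \<exists>s\<in>S \<union> {0}. t \<le> s)))"
proof
  assume R: "S \<inter> Vpos \<noteq> {} \<or> (n \<noteq> 0 \<and> (\<exists>T\<in>Posi' n A. \<forall>t\<in>T. \<exists>s\<in>S \<union> {0}. t \<le> s))"
  have finS: "finite S" using assms(2) by (simp add: optsets_def)
  show "S \<in> Ex (A ` {..<n})"
    unfolding Ex_def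
  proof (intro CollectI conjI allI impI)
    show "S \<in> optsets" by (rule assms(2))
    fix K assume KA: "coherent K \<and> A ` {..<n} \<subseteq> K"
    then have K: "coherent K" and AK: "\<forall>j<n. A j \<in> K" by auto
    from R show "S \<in> K"
    proof
      assume "S \<inter> Vpos \<noteq> {}"
      then obtain u where u: "u \<in> S" "u \<in> Vpos" by auto
      have "{u} \<union> S \<in> K" using coh_union[OF K coh_pos[OF K u(2)] finS] .
      moreover have "{u} \<union> S = S" using u by auto
      ultimately show ?thesis by simp
    next
      assume "n \<noteq> 0 \<and> (\<exists>T\<in>Posi' n A. \<forall>t\<in>T. \<exists>s\<in>S \<union> {0}. t \<le> s)"
      then obtain T where T: "T \<in> Posi' n A" and dom: "\<forall>t\<in>T. \<exists>s\<in>S \<union> {0}. t \<le> s" by blast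
      from T obtain lam where "validlam n A lam" "T = comb n lam ` PiE {..<n} A"
        unfolding posi'_iff by blast
      then have "T \<in> K" using posi_in_K[OF K AK] by simp
      then show ?thesis using coh_dom[OF K _ finS dom] by simp
    qed
  qed
next
  assume SE: "S \<in> Ex (A ` {..<n})"
  have "RHS n A S"
  proof (cases "RHS n A {0}")
    case True
    then show ?thesis by (rule R_zero_all)
  next
    case False
    define Kst where "Kst = {B \<in> optsets. RHS n A B}"
    have coh: "coherent Kst"
      unfolding coherent_def
    proof (intro conjI ballI allI impI)
      show "Kst \<subseteq> optsets" by (auto simp: Kst_def)
    next
      fix B :: "'x opt set" assume "B \<in> Kst"
      then show "B - {0} \<in> Kst" by (auto simp: Kst_def optsets_def intro: R_minus0)
    next
      show "{0} \<notin> Kst" using False by (simp add: Kst_def)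
    next
      fix u :: "'x opt" assume "u \<in> Vpos"
      then show "{u} \<in> Kst" by (auto simp: Kst_def optsets_def intro: R_pos)
    next
      fix B1 B2 :: "'x opt set" and lam :: "'x opt \<times> 'x opt \<Rightarrow> real \<times> real"
      assume B1: "B1 \<in> Kst" and B2: "B2 \<in> Kst"
        and L: "\<forall>a\<in>B1. \<forall>b\<in>B2. 0 \<le> fst (lam (a, b)) \<and> 0 \<le> snd (lam (a, b)) \<and> 0 < fst (lam (a, b)) + snd (lam (a, b))"
      have "finite B1" "finite B2" using B1 B2 by (auto simp: Kst_def optsets_def)
      then have "finite {(\<lambda>x. fst (lam (a, b)) * a x + snd (lam (a, b)) * b x) |a b. a \<in> B1 \<and> b \<in> B2}"
        by (rule posi_finite)
      moreover have "RHS n A {(\<lambda>x. fst (lam (a, b)) * a x + snd (lam (a, b)) * b x) |a b. a \<in> B1 \<and> b \<in> B2}"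
        using B1 B2 L by (intro R_K3) (auto simp: Kst_def)
      ultimately show "{(\<lambda>x. fst (lam (a, b)) * a x + snd (lam (a, b)) * b x) |a b. a \<in> B1 \<and> b \<in> B2} \<in> Kst"
        by (simp add: Kst_def optsets_def)
    next
      fix B Q :: "'x opt set" assume "B \<in> Kst" "Q \<in> optsets"
      then show "B \<union> Q \<in> Kst" by (auto simp: Kst_def optsets_def intro: R_union)
    qed
    have "A ` {..<n} \<subseteq> Kst" using assms(1) by (auto simp: Kst_def intro: R_A)
    then have "S \<in> Kst" using SE coh unfolding Ex_def by blast
    then show ?thesis by (simp add: Kst_def)
  qed
  then show "S \<inter> Vpos \<noteq> {} \<or> (n \<noteq> 0 \<and> (\<exists>T\<in>Posi' n A. \<forall>t\<in>T. \<exists>s\<in>S \<union> {0}. t \<le> s))"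
    unfolding RHS_def .
qed

end
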